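(* Let $G=\bigl((f_j)_{j=1}^n;(\mu^{R})_{\emptyset\ne R\subseteq[n]}\bigr)$ be an $n$-resource selection game. If $f_1,\ldots,f_n$ are continuous, then a strong Nash equilibrium exists in $G$.
   Context: Write $[n]=\{1,\ldots,n\}$ and $\mathbb{R}_{\ge}=[0,\infty)$. An $n$-resource selection game is a pair $G=\bigl((f_j)_{j=1}^n;(\mu^{R})_{\emptyset\ne R\subseteq[n]}\bigr)$ where each $f_j:\mathbb{R}_{\ge}\to\mathbb{R}$ is nondecreasing and $\mu^R\in\mathbb{R}_{\ge}$ for every nonempty $R\subseteq[n]$ (the mass of players of type $R$, who may use only resources in $R$). A consumption profile is a map $s$ assigning to each nonempty $R\subseteq[n]$ a vector $s(R)\in\mathbb{R}_{\ge}^{[n]}$ with $s_j(R)=0$ for $j\notin R$ and $\sum_{j}s_j(R)=\mu^R$. The load of resource $j$ is $\mu^s_j=\sum_{R}s_j(R)$ and its cost is $h^s_j=f_j(\mu^s_j)$. $s$ is a Nash equilibrium if for every nonempty $R$, every $k$ with $s_k(R)>0$ and every $j\in R$, $h^s_k\le h^s_j$. For a Nash equilibrium $s$ and $R$ with $\mu^R>0$, let $h^R=h^s_k$ for any $k$ with $s_k(R)>0$ (well defined). A Nash equilibrium $s$ is a strong Nash equilibrium if there is no consumption profile $s'\ne s$ such that for every nonempty $R$ and every $k$ with $s'_k(R)>s_k(R)$ one has $h^{s'}_k<h^R$. *)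

theory Defs
  imports "HOL-Analysis.Analysis"
begin

text \<open>Resources are 1..n; player types are the nonempty subsets of {1..n}.
  A profile is s :: nat set => nat => real, s R j = consumption of resource j by type R.\<close>

definition types :: "nat \<Rightarrow> nat set set" where
  "types n = Pow {1..n} - {{}}"

definition is_profile :: "nat \<Rightarrow> (nat set \<Rightarrow> real) \<Rightarrow> (nat set \<Rightarrow> nat \<Rightarrow> real) \<Rightarrow> bool" where
  "is_profile n mu s \<longleftrightarrow>
     (\<forall>R\<in>types n. (\<forall>j\<in>{1..n}. s R j \<ge> 0) \<and> (\<forall>j\<in>{1..n} - R. s R j = 0)
                   \<and> (\<Sum>j\<in>{1..n}. s R j) = mu R)"

definition load :: "nat \<Rightarrow> (nat set \<Rightarrow> nat \<Rightarrow> real) \<Rightarrow> nat \<Rightarrow> real" where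
  "load n s j = (\<Sum>R\<in>types n. s R j)"

definition cost :: "nat \<Rightarrow> (nat \<Rightarrow> real \<Rightarrow> real) \<Rightarrow> (nat set \<Rightarrow> nat \<Rightarrow> real) \<Rightarrow> nat \<Rightarrow> real" where
  "cost n f s j = f j (load n s j)"

definition is_game :: "nat \<Rightarrow> (nat \<Rightarrow> real \<Rightarrow> real) \<Rightarrow> (nat set \<Rightarrow> real) \<Rightarrow> bool" where
  "is_game n f mu \<longleftrightarrow> (\<forall>j\<in>{1..n}. mono_on {0..} (f j)) \<and> (\<forall>R\<in>types n. mu R \<ge> 0)"

definition is_NE :: "nat \<Rightarrow> (nat \<Rightarrow> real \<Rightarrow> real) \<Rightarrow> (nat set \<Rightarrow> real) \<Rightarrow> (nat set \<Rightarrow> nat \<Rightarrow> real) \<Rightarrow> bool" where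
  "is_NE n f mu s \<longleftrightarrow> is_profile n mu s \<and>
     (\<forall>R\<in>types n. \<forall>k\<in>{1..n}. \<forall>j\<in>R. s R k > 0 \<longrightarrow> cost n f s k \<le> cost n f s j)"

text \<open>Equilibrium cost h^R of type R (well defined when mu R > 0 and s is a NE).\<close>
definition eq_cost :: "nat \<Rightarrow> (nat \<Rightarrow> real \<Rightarrow> real) \<Rightarrow> (nat set \<Rightarrow> nat \<Rightarrow> real) \<Rightarrow> nat set \<Rightarrow> real" where
  "eq_cost n f s R = cost n f s (SOME k. k \<in> {1..n} \<and> s R k > 0)"

text \<open>Profiles are compared on their relevant domain (types n x {1..n}).\<close>
definition is_SNE :: "nat \<Rightarrow> (nat \<Rightarrow> real \<Rightarrow> real) \<Rightarrow> (nat set \<Rightarrow> real) \<Rightarrow> (nat set \<Rightarrow> nat \<Rightarrow> real) \<Rightarrow> bool" where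
  "is_SNE n f mu s \<longleftrightarrow> is_NE n f mu s \<and>
     \<not> (\<exists>s'. is_profile n mu s' \<and> (\<exists>R\<in>types n. \<exists>j\<in>{1..n}. s' R j \<noteq> s R j) \<and>
            (\<forall>R\<in>types n. \<forall>k\<in>{1..n}. s' R k > s R k \<longrightarrow> cost n f s' k < eq_cost n f s R))"

end

theory Submission imports Defs begin
lemma finite_types: "finite (types n)"
  unfolding types_def by simp

lemma types_sub: "R \<in> types n \<Longrightarrow> R \<subseteq> {1..n}"
  unfolding types_def by auto

lemma load_nonneg: "is_profile n mu s \<Longrightarrow> j \<in> {1..n} \<Longrightarrow> load n s j \<ge> 0"
  unfolding load_def is_profile_def by (auto intro: sum_nonneg)

lemma total_load: "is_profile n mu s \<Longrightarrow> (\<Sum>j\<in>{1..n}. load n s j) = (\<Sum>R\<in>types n. mu R)"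
  unfolding load_def is_profile_def
  by (subst sum.swap) simp

lemma NE_is_SNE:
  assumes game: "is_game n f mu" and ne: "is_NE n f mu s"
  shows "is_SNE n f mu s"
proof -
  have prof: "is_profile n mu s" using ne by (simp add: is_NE_def)
  have mono: "\<And>j. j\<in>{1..n} \<Longrightarrow> mono_on {0..} (f j)" using game by (simp add: is_game_def)
  have ne2: "\<And>R k j. R\<in>types n \<Longrightarrow> k\<in>{1..n} \<Longrightarrow> j\<in>R \<Longrightarrow> s R k > 0 \<Longrightarrow> cost n f s k \<le> cost n f s j"
    using ne by (simp add: is_NE_def)
  {
    fix s' assume prof': "is_profile n mu s'"
      and diff: "\<exists>R\<in>types n. \<exists>j\<in>{1..n}. s' R j \<noteq> s R j"
      and C: "\<forall>R\<in>types n. \<forall>k\<in>{1..n}. s' R k > s R k \<longrightarrow> cost n f s' k < eq_cost n f s R"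
    define K where "K = {k\<in>{1..n}. \<exists>R\<in>types n. s' R k > s R k}"
    have c1: "load n s' k < load n s k" if kK: "k \<in> K" for k
    proof -
      from kK obtain R where R: "R \<in> types n" "k \<in> {1..n}" "s' R k > s R k" unfolding K_def by auto
      have s0: "s R k \<ge> 0" using prof R unfolding is_profile_def by auto
      have kR: "k \<in> R"
      proof (rule ccontr)
        assume "k \<notin> R" then have "s' R k = 0" using prof' R unfolding is_profile_def by auto
        with s0 R show False by simp
      qed
      have "s' R k \<le> (\<Sum>i\<in>{1..n}. s' R i)"
        using prof' R by (intro member_le_sum) (auto simp: is_profile_def)
      also have "\<dots> = (\<Sum>i\<in>{1..n}. s R i)" using prof prof' R by (simp add: is_profile_def)
      finally have "(\<Sum>i\<in>{1..n}. s R i) > 0" using s0 R by linarith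
      then have ex: "\<exists>k. k \<in> {1..n} \<and> s R k > 0"
        by (metis (no_types, lifting) linorder_not_less sum_nonpos)
      define k0 where "k0 = (SOME k. k \<in> {1..n} \<and> s R k > 0)"
      have k0: "k0 \<in> {1..n} \<and> s R k0 > 0" unfolding k0_def by (rule someI_ex[OF ex])
      have "eq_cost n f s R = cost n f s k0" unfolding eq_cost_def k0_def ..
      also have "\<dots> \<le> cost n f s k" using ne2[OF R(1) _ kR] k0 by auto
      finally have e1: "eq_cost n f s R \<le> cost n f s k" .
      have "cost n f s' k < eq_cost n f s R" using C R by blast
      with e1 have "f k (load n s' k) < f k (load n s k)" by (simp add: cost_def)
      moreover have "load n s' k \<ge> 0" "load n s k \<ge> 0"
        using load_nonneg prof prof' R by auto
      ultimately show ?thesis using mono_onD[OF mono[OF R(2)]]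
        by (metis atLeast_iff linorder_not_less order.strict_iff_not)
    qed
    have c2: "load n s' k \<le> load n s k" if "k \<in> {1..n}" for k
    proof (cases "k \<in> K")
      case True then show ?thesis using c1 by fastforce
    next
      case False
      then have "\<forall>R\<in>types n. s' R k \<le> s R k" using that unfolding K_def by auto
      then show ?thesis unfolding load_def by (intro sum_mono) auto
    qed
    have Kempty: "K = {}"
    proof (rule ccontr)
      assume "K \<noteq> {}" then obtain k where "k \<in> K" by auto
      then have "k \<in> {1..n}" unfolding K_def by auto
      have "(\<Sum>j\<in>{1..n}. load n s' j) < (\<Sum>j\<in>{1..n}. load n s j)"
        using c1 c2 \<open>k \<in> K\<close> \<open>k \<in> {1..n}\<close> by (intro sum_strict_mono_ex1) (auto intro!: bexI[of _ k])
      then show False using total_load[OF prof] total_load[OF prof'] by simp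
    qed
    obtain R j where Rj: "R \<in> types n" "j \<in> {1..n}" "s' R j \<noteq> s R j" using diff by auto
    have le: "\<And>i. i \<in> {1..n} \<Longrightarrow> s' R i \<le> s R i" using Kempty Rj(1) unfolding K_def
      by (metis (mono_tags, lifting) empty_iff linorder_not_less mem_Collect_eq)
    have "s' R j = s R j"
      apply (rule sum_mono_inv[where I="{1..n}"])
      using prof prof' Rj le by (auto simp: is_profile_def)
    with Rj have False by simp
  }
  then show ?thesis unfolding is_SNE_def using ne by blast
qed
lemma cpt: fixes S :: "'a \<Rightarrow> real set" assumes "\<And>i. compact (S i)" shows "compact (PiE UNIV S)"
proof -
  have "compactin (product_topology (\<lambda>_. euclidean) UNIV) (PiE UNIV S)"
    using assms by (simp add: compactin_PiE)
  then show ?thesis by (simp add: euclidean_product_topology)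
qed

lemma coord_cont[continuous_intros]: "continuous_on S (\<lambda>x::'a\<Rightarrow>real. x p)"
  by (rule continuous_on_subset[OF continuous_on_product_coordinates]) simp

lemma antideriv:
  fixes g :: "real \<Rightarrow> real"
  assumes "continuous_on UNIV g" "y > -1"
  shows "((\<lambda>x. integral {-1..x} g) has_real_derivative g y) (at y)"
proof -
  have "((\<lambda>x. integral {-1..x} g) has_real_derivative g y) (at y within {-1..y+1})"
    using assms by (intro integral_has_real_derivative) (auto intro: continuous_on_subset)
  moreover have "at y within {-1..y+1} = at y"
    using assms by (intro at_within_interior) (simp add: interior_atLeastAtMost_real)
  ultimately show ?thesis by simp
qed

lemma NE_exists:
  assumes game: "is_game n f mu"
    and cont: "\<forall>j\<in>{1..n}. continuous_on {0..} (f j)"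
  shows "\<exists>s. is_NE n f mu s"
proof -
  define T where "T = types n"
  define D where "D = T \<times> {1..n}"
  have finT: "finite T" unfolding T_def by (rule finite_types)
  have mu0: "\<And>R. R \<in> T \<Longrightarrow> mu R \<ge> 0" using game by (simp add: is_game_def T_def)
  define B where "B = PiE UNIV (\<lambda>p::nat set \<times> nat. if p \<in> D then {0..mu (fst p)} else {0})"
  define P where "P = B \<inter> (\<Inter>R\<in>T. {x. (\<Sum>j\<in>{1..n}. x (R,j)) = mu R})
                       \<inter> (\<Inter>R\<in>T. \<Inter>j\<in>{1..n} - R. {x. x (R,j) = 0})"
  have "compact B" unfolding B_def by (rule cpt) auto
  moreover have "closed (\<Inter>R\<in>T. {x::nat set \<times> nat \<Rightarrow> real. (\<Sum>j\<in>{1..n}. x (R,j)) = mu R})"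
    by (intro closed_INT ballI closed_Collect_eq continuous_intros)
  moreover have "closed (\<Inter>R\<in>T. \<Inter>j\<in>{1..n} - R. {x::nat set \<times> nat \<Rightarrow> real. x (R,j) = 0})"
    by (intro closed_INT ballI closed_Collect_eq continuous_intros)
  ultimately have cP: "compact P" unfolding P_def
    by (intro compact_Int_closed) auto
  define L where "L = (\<lambda>(x::nat set \<times> nat \<Rightarrow> real) i. \<Sum>R\<in>T. x (R,i))"
  have inP: "x \<in> P \<longleftrightarrow> (\<forall>p. p \<notin> D \<longrightarrow> x p = 0) \<and> (\<forall>p\<in>D. 0 \<le> x p \<and> x p \<le> mu (fst p))
     \<and> (\<forall>R\<in>T. (\<Sum>j\<in>{1..n}. x (R,j)) = mu R) \<and> (\<forall>R\<in>T. \<forall>j\<in>{1..n} - R. x (R,j) = 0)" for x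
    unfolding P_def B_def PiE_def Pi_def by (auto split: if_splits)
  have xnn: "x p \<ge> 0" if "x \<in> P" for x p
  proof (cases "p \<in> D")
    case False then show ?thesis using that unfolding inP by (metis order_refl)
  qed (use that in \<open>auto simp: inP\<close>)
  have Lnn: "L x i \<ge> 0" if "x \<in> P" for x i
    using that xnn unfolding L_def by (intro sum_nonneg) auto
  define g where "g = (\<lambda>i y. f i (max 0 y))"
  define F where "F = (\<lambda>i y. integral {-1..y} (g i))"
  have gc: "continuous_on UNIV (g i)" if "i \<in> {1..n}" for i
    unfolding g_def
    by (rule continuous_on_compose2[of "{0..}" "f i"]) (use cont that in \<open>auto intro: continuous_intros\<close>)
  have Fd: "(F i has_real_derivative g i y) (at y)" if "i \<in> {1..n}" "y > -1" for i y
    unfolding F_def using antideriv gc that by blast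
  have Fc: "continuous_on {0..} (F i)" if "i \<in> {1..n}" for i
  proof (intro continuous_at_imp_continuous_on ballI)
    fix y :: real assume "y \<in> {0..}"
    then have "(F i has_real_derivative g i y) (at y)" using Fd[OF that] by auto
    then show "isCont (F i) y" by (rule DERIV_isCont)
  qed
  define Phi where "Phi = (\<lambda>x. \<Sum>i\<in>{1..n}. F i (L x i))"
  have Lc: "continuous_on P (\<lambda>x. L x i)" for i
    unfolding L_def by (intro continuous_intros)
  have "continuous_on P Phi" unfolding Phi_def
    by (intro continuous_on_sum continuous_on_compose2[OF Fc Lc]) (use Lnn in auto)
  define x1 where "x1 = (\<lambda>p::nat set \<times> nat. if fst p \<in> T \<and> snd p = Min (fst p) then mu (fst p) else 0)"
  have "x1 \<in> P"
  proof -
    have R: "R \<noteq> {}" "finite R" "R \<subseteq> {1..n}" if "R \<in> T" for R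
      using that unfolding T_def types_def by (auto intro: finite_subset)
    have M1: "Min R \<in> R" if "R \<in> T" for R using R[OF that] by (intro Min_in) auto
    have M: "Min R \<in> R" "Min R \<in> {1..n}" if "R \<in> T" for R using M1[OF that] R(3)[OF that] by blast+
    show ?thesis unfolding inP
    proof (intro conjI allI impI ballI)
      fix p assume "p \<notin> D" then show "x1 p = 0" unfolding x1_def D_def using M by (cases p) auto
    next
      fix p assume "p \<in> D" then show "0 \<le> x1 p" "x1 p \<le> mu (fst p)" unfolding x1_def D_def using mu0 by auto
    next
      fix R assume "R \<in> T"
      then show "(\<Sum>j\<in>{1..n}. x1 (R,j)) = mu R" unfolding x1_def using M
        by (simp add: sum.delta')
    next
      fix R j assume "R \<in> T" "j \<in> {1..n} - R" then show "x1 (R,j) = 0" unfolding x1_def using M by auto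
    qed
  qed
  then have "P \<noteq> {}" by auto
  obtain x0 where x0: "x0 \<in> P" and minx: "\<And>y. y \<in> P \<Longrightarrow> Phi x0 \<le> Phi y"
    using continuous_attains_inf[OF cP \<open>P \<noteq> {}\<close> \<open>continuous_on P Phi\<close>] by blast
  define s where "s = (\<lambda>R j. x0 (R,j))"
  have Ls: "load n s i = L x0 i" for i unfolding load_def L_def s_def T_def by simp
  have prof: "is_profile n mu s" using x0 xnn unfolding inP is_profile_def s_def T_def by auto
  have "is_NE n f mu s" unfolding is_NE_def
  proof (intro conjI prof ballI impI)
    fix R k j assume R: "R \<in> types n" and k: "k \<in> {1..n}" and jR: "j \<in> R" and pos: "s R k > 0"
    have RT: "R \<in> T" using R T_def by simp
    have j: "j \<in> {1..n}" using types_sub[OF R] jR by auto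
    have kR: "k \<in> R"
    proof (rule ccontr)
      assume "k \<notin> R" then have "x0 (R,k) = 0" using x0 RT k unfolding inP by blast
      with pos show False by (simp add: s_def)
    qed
    show "cost n f s k \<le> cost n f s j"
    proof (rule ccontr)
      assume "\<not> ?thesis"
      then have lt: "f j (L x0 j) < f k (L x0 k)" by (simp add: cost_def Ls)
      then have jk: "j \<noteq> k" by auto
      define a where "a = x0 (R,k)"
      have a: "a > 0" using pos by (simp add: a_def s_def)
      define mj where "mj = L x0 j"
      define mk where "mk = L x0 k"
      have mj: "mj \<ge> 0" and mk: "mk \<ge> 0" using Lnn[OF x0] by (auto simp: mj_def mk_def)
      define psi where "psi = (\<lambda>t. F j (mj + t) + F k (mk - t))"
      have d1: "(F j has_real_derivative g j mj) (at (mj + 0))" using Fd j mj by simp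
      have d2: "(F k has_real_derivative g k mk) (at (mk - 0))" using Fd k mk by simp
      have e1: "((\<lambda>t. mj + t) has_real_derivative 1) (at 0)" by (auto intro!: derivative_eq_intros)
      have e2: "((\<lambda>t. mk - t) has_real_derivative (0 - 1)) (at 0)" by (auto intro!: derivative_eq_intros)
      have "(psi has_real_derivative (g j mj * 1 + g k mk * (0 - 1))) (at 0)"
        unfolding psi_def by (intro DERIV_add DERIV_chain2[OF d1 e1] DERIV_chain2[OF d2 e2])
      moreover have "g j mj * 1 + g k mk * (0 - 1) < 0"
        using lt mj mk by (simp add: g_def mj_def mk_def)
      ultimately obtain d where d: "d > 0" "\<And>h. h > 0 \<Longrightarrow> h < d \<Longrightarrow> psi (0 + h) < psi 0"
        using DERIV_neg_dec_right by blast
      define h where "h = min (d/2) a"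
      have h: "h > 0" "h < d" "h \<le> a" using d a by (auto simp: h_def)
      define y where "y = (\<lambda>p. x0 p + (if p = (R,j) then h else 0) - (if p = (R,k) then h else 0))"
      have Dj: "(R,j) \<in> D" and Dk: "(R,k) \<in> D" using RT j k by (auto simp: D_def)
      have x0P: "(\<forall>p. p \<notin> D \<longrightarrow> x0 p = 0) \<and> (\<forall>p\<in>D. 0 \<le> x0 p \<and> x0 p \<le> mu (fst p))
         \<and> (\<forall>R\<in>T. (\<Sum>j\<in>{1..n}. x0 (R,j)) = mu R) \<and> (\<forall>R\<in>T. \<forall>j\<in>{1..n} - R. x0 (R,j) = 0)"
        using x0 unfolding inP .
      have rowsum: "(\<Sum>i\<in>{1..n}. y (R',i)) = (\<Sum>i\<in>{1..n}. x0 (R',i))" for R'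
      proof (cases "R' = R")
        case True
        have "(\<Sum>i\<in>{1..n}. y (R',i)) = (\<Sum>i\<in>{1..n}. x0 (R',i)) + (\<Sum>i\<in>{1..n}. if i = j then h else 0)
              - (\<Sum>i\<in>{1..n}. if i = k then h else 0)"
          unfolding y_def True by (simp add: sum.distrib sum_subtractf)
        also have "\<dots> = (\<Sum>i\<in>{1..n}. x0 (R',i))" using j k by (simp add: sum.delta)
        finally show ?thesis .
      next
        case False then show ?thesis unfolding y_def by simp
      qed
      have Ly: "L y i = L x0 i + (if i = j then h else 0) - (if i = k then h else 0)" for i
      proof -
        have "L y i = L x0 i + (\<Sum>R'\<in>T. if R' = R \<and> i = j then h else 0) - (\<Sum>R'\<in>T. if R' = R \<and> i = k then h else 0)"
          unfolding L_def y_def by (simp add: sum.distrib sum_subtractf)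
        also have "\<dots> = L x0 i + (if i = j then h else 0) - (if i = k then h else 0)"
          using RT finT by (cases "i = j"; cases "i = k") (simp_all add: sum.delta)
        finally show ?thesis .
      qed
      have yk: "y (R,k) = a - h" using jk by (simp add: y_def a_def)
      have ynn: "0 \<le> y p" for p
        using xnn[OF x0, of p] yk h by (cases "p = (R,k)") (auto simp: y_def)
      have "y \<in> P" unfolding inP
      proof (intro conjI allI impI ballI)
        fix p assume pD: "p \<notin> D"
        then have "x0 p = 0" using x0P by blast
        moreover have "p \<noteq> (R,j)" "p \<noteq> (R,k)" using pD Dj Dk by auto
        ultimately show "y p = 0" by (simp add: y_def)
      next
        fix p assume "p \<in> D" then show "0 \<le> y p" using ynn by auto
      next
        fix p assume pD: "p \<in> D"
        obtain R' i where p: "p = (R',i)" by (cases p)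
        have "R' \<in> T" "i \<in> {1..n}" using pD p by (auto simp: D_def)
        have "y (R',i) \<le> (\<Sum>i\<in>{1..n}. y (R',i))"
          using \<open>i \<in> {1..n}\<close> ynn by (intro member_le_sum) auto
        also have "\<dots> = mu R'" using rowsum x0P \<open>R' \<in> T\<close> by simp
        finally show "y p \<le> mu (fst p)" using p by simp
      next
        fix R' assume "R' \<in> T" then show "(\<Sum>j\<in>{1..n}. y (R',j)) = mu R'" using rowsum x0P by simp
      next
        fix R' i assume "R' \<in> T" "i \<in> {1..n} - R'"
        then show "y (R',i) = 0" using x0P jR kR by (auto simp: y_def)
      qed
      have "Phi y - Phi x0 = (\<Sum>i\<in>{1..n}. F i (L y i) - F i (L x0 i))"
        unfolding Phi_def by (simp add: sum_subtractf)
      also have "\<dots> = (\<Sum>i\<in>{1..n}. (if i = j then F j (mj + h) - F j mj else 0)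
                         + (if i = k then F k (mk - h) - F k mk else 0))"
        by (intro sum.cong refl) (use jk in \<open>auto simp: Ly mj_def mk_def\<close>)
      also have "\<dots> = psi h - psi 0" using j k by (simp add: sum.distrib psi_def)
      also have "\<dots> < 0" using d(2)[OF h(1) h(2)] by simp
      finally have "Phi y < Phi x0" by simp
      with minx[OF \<open>y \<in> P\<close>] show False by simp
    qed
  qed
  then show ?thesis by blast
qed

theorem mainTheorem1:
  fixes n :: nat and f :: "nat \<Rightarrow> real \<Rightarrow> real" and mu :: "nat set \<Rightarrow> real"
  assumes "is_game n f mu"
    and "\<forall>j\<in>{1..n}. continuous_on {0..} (f j)"
  shows "\<exists>s. is_SNE n f mu s"
  using NE_exists[OF assms] NE_is_SNE[OF assms(1)] by blast

end
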